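(* Let $G$ be a locally compact, $\sigma$-compact abelian group acting continuously on a compact metric space $(X,d)$. If the proximal relation $\Pr=\{(x,y):\inf_{t\in G}d(t\cdot x,t\cdot y)=0\}$ is closed in $X\times X$, then $\Pr$ coincides with the complete proximality relation $\sim_{cp}$.
   Context: Let $\mathcal A$ be the collection of subsets $A\subset G$ which contain a translate of every compact subset of $G$. Points $x,y\in X$ are proximal in $A$ if $\inf_{t\in A}d(t\cdot x,t\cdot y)=0$, and completely proximal, $x\sim_{cp}y$, if they are proximal in every $A\in\mathcal A$. *)

theory Defs
  imports "HOL-Analysis.Analysis"
begin

definition group_action :: "('g::ab_group_add \<Rightarrow> 'x \<Rightarrow> 'x) \<Rightarrow> bool" where
  "group_action act \<longleftrightarrow> (\<forall>x. act 0 x = x) \<and> (\<forall>s t x. act (s + t) x = act s (act t x))"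

definition sigma_compact_univ :: "'g::topological_space itself \<Rightarrow> bool" where
  "sigma_compact_univ _ \<longleftrightarrow> (\<exists>K :: nat \<Rightarrow> 'g set. (\<forall>n. compact (K n)) \<and> (\<Union>n. K n) = UNIV)"

definition proximal_in :: "('g \<Rightarrow> 'x::metric_space \<Rightarrow> 'x) \<Rightarrow> 'g set \<Rightarrow> 'x \<Rightarrow> 'x \<Rightarrow> bool" where
  "proximal_in act A x y \<longleftrightarrow> (INF t\<in>A. dist (act t x) (act t y)) = 0"

definition proximal_rel :: "('g \<Rightarrow> 'x::metric_space \<Rightarrow> 'x) \<Rightarrow> ('x \<times> 'x) set" where
  "proximal_rel act = {(x, y). proximal_in act UNIV x y}"

definition thick_sets :: "('g::{topological_space, plus}) set set" where
  "thick_sets = {A. \<forall>K. compact K \<longrightarrow> (\<exists>g. (\<lambda>k. g + k) ` K \<subseteq> A)}"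

definition completely_proximal :: "('g::{topological_space, plus} \<Rightarrow> 'x::metric_space \<Rightarrow> 'x) \<Rightarrow> 'x \<Rightarrow> 'x \<Rightarrow> bool" where
  "completely_proximal act x y \<longleftrightarrow> (\<forall>A\<in>thick_sets. proximal_in act A x y)"

end

theory Submission
  imports Defs
begin

lemma prox_iff:
  assumes "A \<noteq> {}"
  shows "proximal_in act A x y \<longleftrightarrow> (\<forall>e>0. \<exists>t\<in>A. dist (act t x) (act t y) < e)"
proof -
  let ?f = "\<lambda>t. dist (act t x) (act t y)"
  have bdd: "bdd_below (?f ` A)" by (rule bdd_belowI[of _ 0]) auto
  have ge: "0 \<le> (INF t\<in>A. ?f t)" using assms by (intro cINF_greatest) auto
  have less: "\<And>e. (INF t\<in>A. ?f t) < e \<longleftrightarrow> (\<exists>t\<in>A. ?f t < e)"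
    using cINF_less_iff[OF assms bdd] by blast
  show ?thesis
  proof
    assume "proximal_in act A x y"
    then have "(INF t\<in>A. ?f t) = 0" unfolding proximal_in_def by simp
    then show "\<forall>e>0. \<exists>t\<in>A. ?f t < e" using less by auto
  next
    assume H: "\<forall>e>0. \<exists>t\<in>A. ?f t < e"
    have "\<not> (INF t\<in>A. ?f t) > 0"
    proof
      assume p: "(INF t\<in>A. ?f t) > 0"
      then obtain t where "t \<in> A" "?f t < (INF t\<in>A. ?f t)" using H by blast
      then show False using cINF_lower[OF bdd, of t] by simp
    qed
    then show "proximal_in act A x y" unfolding proximal_in_def using ge by simp
  qed
qed

theorem mainTheorem18:
  fixes act :: "'g::{topological_ab_group_add, t2_space} \<Rightarrow> 'x::metric_space \<Rightarrow> 'x"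
  assumes "locally_compact_space (euclidean :: 'g topology)"
    and "sigma_compact_univ TYPE('g)"
    and "compact (UNIV :: 'x set)"
    and "group_action act"
    and "continuous_on UNIV (\<lambda>p :: 'g \<times> 'x. act (fst p) (snd p))"
    and "closed (proximal_rel act)"
  shows "proximal_rel act = {(x, y). completely_proximal act x y}"
proof
  have univ_thick: "UNIV \<in> thick_sets" unfolding thick_sets_def by auto
  show "{(x, y). completely_proximal act x y} \<subseteq> proximal_rel act"
    using univ_thick unfolding completely_proximal_def proximal_rel_def by auto
  have ga0: "\<And>x. act 0 x = x" and ga: "\<And>s t x. act (s + t) x = act s (act t x)"
    using assms(4) unfolding group_action_def by auto
  have P: "(x, y) \<in> proximal_rel act \<longleftrightarrow> (\<forall>e>0. \<exists>t. dist (act t x) (act t y) < e)" for x y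
    unfolding proximal_rel_def using prox_iff[of UNIV act x y] by auto
  have inv: "(act g x, act g y) \<in> proximal_rel act" if "(x, y) \<in> proximal_rel act" for g x y
    unfolding P
  proof (intro allI impI)
    fix e :: real assume "e > 0"
    have "\<exists>t. dist (act t x) (act t y) < e" using that \<open>e > 0\<close> unfolding P by blast
    then obtain t where t: "dist (act t x) (act t y) < e" by blast
    have "act (t - g) (act g z) = act t z" for z using ga[of "t-g" g z] by simp
    then have "dist (act (t - g) (act g x)) (act (t - g) (act g y)) < e"
      using t by simp
    then show "\<exists>t. dist (act t (act g x)) (act t (act g y)) < e" by blast
  qed
  have cont_t: "continuous_on UNIV (act t)" for t
  proof -
    have c1: "continuous_on UNIV (\<lambda>x::'x. (t, x))" by (intro continuous_intros)
    have "continuous_on UNIV (\<lambda>x::'x. act (fst (t, x)) (snd (t, x)))"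
      by (rule continuous_on_compose2[OF assms(5) c1]) auto
    then show ?thesis by simp
  qed
  have cpt: "compact (proximal_rel act)"
  proof -
    have "compact (proximal_rel act \<inter> (UNIV \<times> UNIV))"
      using closed_Int_compact[OF assms(6) compact_Times[OF assms(3) assms(3)]] .
    then show ?thesis by simp
  qed
  have unif: "\<exists>K. finite K \<and> (\<forall>p\<in>proximal_rel act. \<exists>t\<in>K. dist (act t (fst p)) (act t (snd p)) < e)"
    if "e > 0" for e :: real
  proof -
    let ?U = "\<lambda>t. {p. dist (act t (fst p)) (act t (snd p)) < e}"
    have opn: "open (?U t)" for t
    proof (rule open_Collect_less)
      have a: "continuous_on UNIV (\<lambda>p::'x\<times>'x. act t (fst p))"
        by (rule continuous_on_compose2[OF cont_t continuous_on_fst]) auto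
      have b: "continuous_on UNIV (\<lambda>p::'x\<times>'x. act t (snd p))"
        by (rule continuous_on_compose2[OF cont_t continuous_on_snd]) auto
      show "continuous_on UNIV (\<lambda>p::'x\<times>'x. dist (act t (fst p)) (act t (snd p)))"
        using continuous_on_dist[OF a b] .
    qed (rule continuous_on_const)
    have cov: "proximal_rel act \<subseteq> (\<Union>t\<in>UNIV. ?U t)"
    proof
      fix p assume "p \<in> proximal_rel act"
      then obtain t where "dist (act t (fst p)) (act t (snd p)) < e"
        using P[of "fst p" "snd p"] \<open>e > 0\<close> by auto
      then show "p \<in> (\<Union>t\<in>UNIV. ?U t)" by auto
    qed
    obtain K where "finite K" "proximal_rel act \<subseteq> (\<Union>t\<in>K. ?U t)"
      by (rule compactE_image[OF cpt opn cov]) blast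
    then show ?thesis by blast
  qed
  show "proximal_rel act \<subseteq> {(x, y). completely_proximal act x y}"
  proof (clarify)
    fix x y assume xy: "(x, y) \<in> proximal_rel act"
    show "completely_proximal act x y" unfolding completely_proximal_def
    proof
      fix A :: "'g set" assume A: "A \<in> thick_sets"
      have "\<forall>K. compact K \<longrightarrow> (\<exists>g. (\<lambda>k. g + k) ` K \<subseteq> A)"
          using A by (simp add: thick_sets_def)
      then obtain g0 where "(\<lambda>k. g0 + k) ` {0} \<subseteq> A" by (meson compact_sing)
      then have ne: "A \<noteq> {}" by auto
      show "proximal_in act A x y" unfolding prox_iff[OF ne]
      proof (intro allI impI)
        fix e :: real assume "e > 0"
        then obtain K where K: "finite K"
          "\<forall>p\<in>proximal_rel act. \<exists>t\<in>K. dist (act t (fst p)) (act t (snd p)) < e"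
          using unif by blast
        have cK: "compact K" using K(1) by (rule finite_imp_compact)
        have "\<forall>K. compact K \<longrightarrow> (\<exists>g. (\<lambda>k. g + k) ` K \<subseteq> A)"
          using A by (simp add: thick_sets_def)
        then obtain g where g: "(\<lambda>k. g + k) ` K \<subseteq> A" using cK by blast
        obtain t where t: "t \<in> K" "dist (act t (act g x)) (act t (act g y)) < e"
          using K(2) inv[OF xy, of g] by auto
        have "g + t \<in> A" using g t(1) by auto
        moreover have "dist (act (g + t) x) (act (g + t) y) < e"
        proof -
          have "act (g + t) z = act t (act g z)" for z using ga[of t g z] by (simp add: add.commute)
          then show ?thesis using t(2) by simp
        qed
        ultimately show "\<exists>t\<in>A. dist (act t x) (act t y) < e" by blast
      qed
    qed
  qed
qed

end
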